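(* Let $\mathcal{D}=\{(\mathbf{x}_i,y_i)\}_{i\in\mathcal{D}}$ be a finite training set with inputs $\mathcal{X}=\{\mathbf{x}_i\}_{i\in\mathcal{D}}$, let $\boldsymbol{\phi}_i=\boldsymbol{\phi}(\mathbf{x}_i)\in\mathbb{R}^P$, and consider the generalized linear model $f_{\mathbf{w}}^i=\boldsymbol{\phi}_i^\top\mathbf{w}$, $\mathbf{w}\in\mathbb{R}^P$. Let $A$ be the (strictly convex, differentiable) log-partition function of a scalar exponential family, $h=A'$, and $\ell(y,h(f))=-yf+A(f)$, with $\ell_i(\mathbf{w})=\ell(y_i,h(f_{\mathbf{w}}^i))$. Let $\mathcal{R},\mathcal{G}:\mathbb{R}^P\to\mathbb{R}$ be strictly convex differentiable regularizers, and let $$\mathbf{w}_*=\arg\min_{\mathbf{w}}\sum_{i\in\mathcal{D}}\ell_i(\mathbf{w})+\mathcal{R}(\mathbf{w}),\qquad \mathbf{w}_{\mathcal{G}}=\arg\min_{\mathbf{w}}\sum_{i\in\mathcal{D}}\ell_i(\mathbf{w})+\mathcal{G}(\mathbf{w}).$$ Let $\boldsymbol{\eta}_*=\nabla\mathcal{R}(\mathbf{w}_* )$, let $\mathcal{R}^*$ be the convex conjugate of $\mathcal{R}$, and define $$\mathcal{B}_{\mathcal{G}\mathcal{R}}(\mathbf{w}\|\mathbf{w}_* )=\mathcal{G}(\mathbf{w})+\mathcal{R}^*(\boldsymbol{\eta}_* )-\mathbf{w}^\top\boldsymbol{\eta}_*,$$ $$\mathcal{K}(\mathbf{w};\mathbf{w}_*,\mathcal{M})=\sum_{i\in\mathcal{M}}\ell\big(h(f_{\mathbf{w}_*}^i),h(f_{\mathbf{w}}^i)\big)+\mathcal{B}_{\mathcal{G}\mathcal{R}}(\mathbf{w}\|\mathbf{w}_*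 ),\qquad \hat{\mathbf{w}}_{\mathcal{G}}=\arg\min_{\mathbf{w}}\mathcal{K}(\mathbf{w};\mathbf{w}_*,\mathcal{M}),$$ where $\ell(h(f_{\mathbf{w}_*}^i),h(f_{\mathbf{w}}^i))=-h(f_{\mathbf{w}_*}^i)f_{\mathbf{w}}^i+A(f_{\mathbf{w}}^i)$. If $\mathcal{M}=\mathcal{X}$, then $\mathbf{w}_{\mathcal{G}}=\hat{\mathbf{w}}_{\mathcal{G}}$.
   Context: All minimizations are over $\mathbb{R}^P$. $\mathbf{w}_*$ is the base model trained with regularizer $\mathcal{R}$; the task is to obtain the model trained with a new regularizer $\mathcal{G}$ using only $\mathbf{w}_*$ and the memory inputs $\mathcal{M}$ (here the full input set $\mathcal{X}$), with the base model's predictions $h(f_{\mathbf{w}_*}^i)$ used in place of labels. *)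

theory Defs
  imports "HOL-Analysis.Analysis"
begin

definition strict_convex_on :: "'a::real_vector set \<Rightarrow> ('a \<Rightarrow> real) \<Rightarrow> bool" where
  "strict_convex_on S f \<longleftrightarrow>
     (\<forall>x\<in>S. \<forall>y\<in>S. x \<noteq> y \<longrightarrow> (\<forall>u::real. 0 < u \<longrightarrow> u < 1 \<longrightarrow>
        f ((1 - u) *\<^sub>R x + u *\<^sub>R y) < (1 - u) * f x + u * f y))"

definition grad :: "('a::real_inner \<Rightarrow> real) \<Rightarrow> 'a \<Rightarrow> 'a" where
  "grad F w = (THE g. (F has_derivative (\<lambda>v. g \<bullet> v)) (at w))"

text \<open>Convex conjugate F^*(eta) = sup_w (w . eta - F w) (real-valued supremum;
  used only at points where the supremum is finite).\<close>
definition conj_fun :: "('a::real_inner \<Rightarrow> real) \<Rightarrow> 'a \<Rightarrow> real" where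
  "conj_fun F \<eta> = (SUP w. w \<bullet> \<eta> - F w)"

definition is_argmin :: "('a \<Rightarrow> real) \<Rightarrow> 'a \<Rightarrow> bool" where
  "is_argmin F w \<longleftrightarrow> (\<forall>v. F w \<le> F v)"

text \<open>Loss of the exponential family: ell(y, h(f)) = - y f + A f.\<close>
definition ell :: "(real \<Rightarrow> real) \<Rightarrow> real \<Rightarrow> real \<Rightarrow> real" where
  "ell A y f = - y * f + A f"

end

theory Submission
  imports Defs
begin

lemma strict_convex_imp_convex:
  assumes "strict_convex_on UNIV f"
  shows "f ((1/2) *\<^sub>R x + (1/2) *\<^sub>R y) \<le> (1/2) * f x + (1/2) * f y"
proof (cases "x = y")
  case True
  then show ?thesis by (simp add: scaleR_add_left[symmetric])
next
  case False
  have "f ((1 - 1/2) *\<^sub>R x + (1/2) *\<^sub>R y) < (1 - 1/2) * f x + (1/2) * f y"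
    using assms[unfolded strict_convex_on_def, rule_format, OF UNIV_I UNIV_I False, of "1/2"] by simp
  then show ?thesis by simp
qed

theorem theorem2:
  fixes D :: "'i set"
    and \<phi> :: "'i \<Rightarrow> real ^ 'p"
    and y :: "'i \<Rightarrow> real"
    and A :: "real \<Rightarrow> real"
    and R G :: "real ^ 'p \<Rightarrow> real"
    and w_star w_G :: "real ^ 'p"
  assumes finD: "finite D"
    and A_sc: "strict_convex_on UNIV A"
    and A_diff: "\<And>x. A differentiable (at x)"
    and R_sc: "strict_convex_on UNIV R"
    and R_diff: "\<And>w. R differentiable (at w)"
    and G_sc: "strict_convex_on UNIV G"
    and G_diff: "\<And>w. G differentiable (at w)"
    and w_star_min: "is_argmin (\<lambda>w. (\<Sum>i\<in>D. ell A (y i) (\<phi> i \<bullet> w)) + R w) w_star"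
    and w_G_min: "is_argmin (\<lambda>w. (\<Sum>i\<in>D. ell A (y i) (\<phi> i \<bullet> w)) + G w) w_G"
  shows "{w_hat. is_argmin
            (\<lambda>w. (\<Sum>i\<in>D. ell A (deriv A (\<phi> i \<bullet> w_star)) (\<phi> i \<bullet> w))
                 + (G w + conj_fun R (grad R w_star) - w \<bullet> grad R w_star))
            w_hat} = {w_G}"
proof -
  define h where "h i = deriv A (\<phi> i \<bullet> w_star)" for i
  define g where "g = (\<Sum>i\<in>D. (y i - h i) *\<^sub>R \<phi> i)"
  obtain DR where DR: "(R has_derivative DR) (at w_star)"
    using R_diff unfolding differentiable_def by blast
  have dA: "\<And>i. (A has_derivative (\<lambda>t. h i * t)) (at (\<phi> i \<bullet> w_star))"
    unfolding h_def using A_diff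
    by (metis DERIV_deriv_iff_real_differentiable has_field_derivative_def)
  have dAi: "\<And>i. ((\<lambda>w. A (\<phi> i \<bullet> w)) has_derivative (\<lambda>v. h i * (\<phi> i \<bullet> v))) (at w_star)"
  proof -
    fix i
    have lin: "((\<lambda>w. \<phi> i \<bullet> w) has_derivative (\<lambda>v. \<phi> i \<bullet> v)) (at w_star)"
      by (intro derivative_intros)
    show "?thesis i"
      using has_derivative_compose[OF lin dA[of i]] by (simp add: o_def)
  qed
  have dL: "((\<lambda>w. (\<Sum>i\<in>D. ell A (y i) (\<phi> i \<bullet> w)) + R w) has_derivative
       (\<lambda>v. (\<Sum>i\<in>D. - y i * (\<phi> i \<bullet> v) + h i * (\<phi> i \<bullet> v)) + DR v)) (at w_star)"
    unfolding ell_def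
    by (intro has_derivative_add has_derivative_sum DR dAi has_derivative_mult_right
        bounded_linear.has_derivative[OF bounded_linear_inner_right] has_derivative_ident)
  have "(\<lambda>v. (\<Sum>i\<in>D. - y i * (\<phi> i \<bullet> v) + h i * (\<phi> i \<bullet> v)) + DR v) = (\<lambda>v. 0)"
    by (rule has_derivative_local_min[OF dL]) (use w_star_min in \<open>auto simp: is_argmin_def\<close>)
  then have DRv: "DR v = g \<bullet> v" for v
    unfolding g_def
    by (drule_tac fun_cong[of _ _ v])
       (simp add: inner_sum_left algebra_simps sum.distrib sum_subtractf sum_negf)
  have DRg: "DR = (\<lambda>v. g \<bullet> v)" using DRv by auto
  have gradR: "grad R w_star = g"
    unfolding grad_def
  proof (rule the_equality)
    show "(R has_derivative (\<bullet>) g) (at w_star)" using DR DRg by simp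
  next
    fix g' assume "(R has_derivative (\<bullet>) g') (at w_star)"
    from has_derivative_unique[OF this DR[unfolded DRg]]
    have "\<And>v. g' \<bullet> v = g \<bullet> v" by metis
    then have "(g' - g) \<bullet> (g' - g) = 0" by (simp add: inner_diff_left)
    then show "g' = g" by simp
  qed
  define LG where "LG w = (\<Sum>i\<in>D. ell A (y i) (\<phi> i \<bullet> w)) + G w" for w
  define c where "c = conj_fun R g"
  have Keq: "(\<Sum>i\<in>D. ell A (deriv A (\<phi> i \<bullet> w_star)) (\<phi> i \<bullet> w))
                 + (G w + conj_fun R (grad R w_star) - w \<bullet> grad R w_star) = LG w + c" for w
    unfolding gradR LG_def c_def g_def h_def[symmetric] ell_def
    by (simp add: inner_sum_right inner_commute algebra_simps sum.distrib sum_subtractf sum_negf)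
  have uniq: "w = w_G" if "is_argmin LG w" for w
  proof (rule ccontr)
    assume ne: "w \<noteq> w_G"
    define m where "m = (1/2) *\<^sub>R w + (1/2) *\<^sub>R w_G"
    have Gm: "G m < (1/2) * G w + (1/2) * G w_G"
    proof -
      have "G ((1 - 1/2) *\<^sub>R w + (1/2) *\<^sub>R w_G) < (1 - 1/2) * G w + (1/2) * G w_G"
        using G_sc[unfolded strict_convex_on_def, rule_format, OF UNIV_I UNIV_I ne, of "1/2"] by simp
      then show ?thesis unfolding m_def by simp
    qed
    have Am: "ell A (y i) (\<phi> i \<bullet> m) \<le> (1/2) * ell A (y i) (\<phi> i \<bullet> w) + (1/2) * ell A (y i) (\<phi> i \<bullet> w_G)" for i
    proof -
      have "\<phi> i \<bullet> m = (1/2) *\<^sub>R (\<phi> i \<bullet> w) + (1/2) *\<^sub>R (\<phi> i \<bullet> w_G)"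
        unfolding m_def by (simp add: inner_add_right)
      then have "A (\<phi> i \<bullet> m) \<le> (1/2) * A (\<phi> i \<bullet> w) + (1/2) * A (\<phi> i \<bullet> w_G)"
        using strict_convex_imp_convex[OF A_sc, of "\<phi> i \<bullet> w" "\<phi> i \<bullet> w_G"] by simp
      moreover have "\<phi> i \<bullet> m = (1/2) * (\<phi> i \<bullet> w) + (1/2) * (\<phi> i \<bullet> w_G)"
        unfolding m_def by (simp add: inner_add_right)
      ultimately show ?thesis unfolding ell_def by (simp add: algebra_simps)
    qed
    have "LG m < (1/2) * LG w + (1/2) * LG w_G"
    proof -
      have "(\<Sum>i\<in>D. ell A (y i) (\<phi> i \<bullet> m)) \<le> (\<Sum>i\<in>D. (1/2) * ell A (y i) (\<phi> i \<bullet> w) + (1/2) * ell A (y i) (\<phi> i \<bullet> w_G))"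
        by (rule sum_mono) (rule Am)
      then show ?thesis unfolding LG_def using Gm
        by (simp add: sum.distrib sum_distrib_left[symmetric] sum_divide_distrib[symmetric] algebra_simps)
    qed
    moreover have "LG w \<le> LG m" "LG w_G \<le> LG w"
      using that w_G_min unfolding is_argmin_def LG_def by auto
    ultimately show False by linarith
  qed
  have wGm: "is_argmin LG w_G" using w_G_min unfolding LG_def .
  have iff: "is_argmin (\<lambda>w. LG w + c) w \<longleftrightarrow> is_argmin LG w" for w
    unfolding is_argmin_def by simp
  show ?thesis
    unfolding Keq iff using uniq wGm by blast
qed

end
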